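(* Let $\mathcal{H}$ be a complex Hilbert space and let $T, S\in\mathbb{B}(\mathcal{H})$. If $N(\cdot)$ is an algebra norm on $\mathbb{B}(\mathcal{H})$, then for each choice of sign, $$w_{N}(TS \pm ST^* ) \leq w_{N}(S)\big(N(T) + N(T^* )\big).$$ In particular, if $N(\cdot)$ is a self-adjoint algebra norm, then $w_{N}(TS \pm ST^* ) \leq 2w_{N}(S)N(T)$.
   Context: $\mathbb{B}(\mathcal{H})$ is the algebra of bounded linear operators on $\mathcal{H}$. A norm $N(\cdot)$ on $\mathbb{B}(\mathcal{H})$ is an algebra norm if $N(TS)\le N(T)N(S)$ for all $T,S$, and is self-adjoint if $N(T^* )=N(T)$ for all $T$. For $A\in\mathbb{B}(\mathcal{H})$, ${\rm Re}(A)=\frac{A+A^*}{2}$. The generalized numerical radius is $w_N(T)=\sup_{\theta\in\mathbb{R}} N\big({\rm Re}(e^{i\theta}T)\big)$. *)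

theory Defs
  imports "HOL-Analysis.Analysis"
begin

text \<open>Complex Hilbert spaces: a (real) Banach space equipped with a complex
scalar multiplication compatible with the real one, and a complex inner product
(conjugate-linear in the first argument, linear in the second) inducing the norm.\<close>

class complex_hilbert = banach +
  fixes scaleC :: "complex \<Rightarrow> 'a \<Rightarrow> 'a" (infixr "*\<^sub>C" 75)
    and cinner :: "'a \<Rightarrow> 'a \<Rightarrow> complex"
  assumes scaleC_add_right: "a *\<^sub>C (x + y) = a *\<^sub>C x + a *\<^sub>C y"
    and scaleC_add_left: "(a + b) *\<^sub>C x = a *\<^sub>C x + b *\<^sub>C x"
    and scaleC_scaleC: "a *\<^sub>C (b *\<^sub>C x) = (a * b) *\<^sub>C x"
    and scaleC_one: "1 *\<^sub>C x = x"
    and scaleC_of_real: "complex_of_real r *\<^sub>C x = r *\<^sub>R x"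
    and cinner_conj: "cinner x y = cnj (cinner y x)"
    and cinner_add_right: "cinner x (y + z) = cinner x y + cinner x z"
    and cinner_scaleC_right: "cinner x (a *\<^sub>C y) = a * cinner x y"
    and cinner_self_nonneg: "0 \<le> Re (cinner x x)"
    and cinner_self_eq_zero: "cinner x x = 0 \<longleftrightarrow> x = 0"
    and norm_cinner: "norm x = sqrt (Re (cinner x x))"

definition bounded_clinear_op :: "('a::complex_hilbert \<Rightarrow> 'a) \<Rightarrow> bool" where
  "bounded_clinear_op T \<longleftrightarrow>
     (\<forall>x y. T (x + y) = T x + T y) \<and> (\<forall>c x. T (c *\<^sub>C x) = c *\<^sub>C T x) \<and>
     (\<exists>K. \<forall>x. norm (T x) \<le> norm x * K)"

definition cadjoint :: "('a::complex_hilbert \<Rightarrow> 'a) \<Rightarrow> ('a \<Rightarrow> 'a)" where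
  "cadjoint T = (SOME S. \<forall>x y. cinner (T x) y = cinner x (S y))"

definition opRe :: "('a::complex_hilbert \<Rightarrow> 'a) \<Rightarrow> ('a \<Rightarrow> 'a)" where
  "opRe A = (\<lambda>x. (1/2) *\<^sub>C (A x + cadjoint A x))"

definition algebra_norm :: "(('a::complex_hilbert \<Rightarrow> 'a) \<Rightarrow> real) \<Rightarrow> bool" where
  "algebra_norm N \<longleftrightarrow>
     (\<forall>T. bounded_clinear_op T \<longrightarrow> 0 \<le> N T \<and> (N T = 0 \<longleftrightarrow> T = (\<lambda>x. 0))) \<and>
     (\<forall>c T. bounded_clinear_op T \<longrightarrow> N (\<lambda>x. c *\<^sub>C T x) = cmod c * N T) \<and>
     (\<forall>T S. bounded_clinear_op T \<and> bounded_clinear_op S \<longrightarrow> N (\<lambda>x. T x + S x) \<le> N T + N S) \<and>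
     (\<forall>T S. bounded_clinear_op T \<and> bounded_clinear_op S \<longrightarrow> N (T \<circ> S) \<le> N T * N S)"

definition self_adjoint_norm :: "(('a::complex_hilbert \<Rightarrow> 'a) \<Rightarrow> real) \<Rightarrow> bool" where
  "self_adjoint_norm N \<longleftrightarrow> (\<forall>T. bounded_clinear_op T \<longrightarrow> N (cadjoint T) = N T)"

definition wN :: "(('a::complex_hilbert \<Rightarrow> 'a) \<Rightarrow> real) \<Rightarrow> ('a \<Rightarrow> 'a) \<Rightarrow> real" where
  "wN N T = (SUP \<theta>\<in>(UNIV::real set). N (opRe (\<lambda>x. exp (\<i> * complex_of_real \<theta>) *\<^sub>C T x)))"

end

theory Submission
  imports Defs
begin


lemma cinner_add_left: "cinner (x + y) (z::'a::complex_hilbert) = cinner x z + cinner y z"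
proof -
  have "cinner (x+y) z = cnj (cinner z (x+y))" by (rule cinner_conj)
  also have "\<dots> = cnj (cinner z x) + cnj (cinner z y)" by (simp add: cinner_add_right)
  also have "\<dots> = cinner x z + cinner y z" by (simp add: cinner_conj[of x z] cinner_conj[of y z])
  finally show ?thesis .
qed
lemma cinner_scaleC_left: "cinner (c *\<^sub>C x) (y::'a::complex_hilbert) = cnj c * cinner x y"
proof -
  have "cinner (c *\<^sub>C x) y = cnj (cinner y (c *\<^sub>C x))" by (rule cinner_conj)
  also have "\<dots> = cnj c * cnj (cinner y x)" by (simp add: cinner_scaleC_right)
  also have "\<dots> = cnj c * cinner x y" by (simp add: cinner_conj[of x y])
  finally show ?thesis .
qed
lemma scaleC_zero_left[simp]: "0 *\<^sub>C (x::'a::complex_hilbert) = 0"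
  using scaleC_of_real[of 0 x] by simp
lemma scaleC_zero_right[simp]: "c *\<^sub>C (0::'a::complex_hilbert) = 0"
  using scaleC_add_right[of c 0 0] by simp
lemma scaleC_minus_right: "c *\<^sub>C (- x::'a::complex_hilbert) = - (c *\<^sub>C x)"
  using scaleC_add_right[of c x "-x"] by (simp add: add_eq_0_iff2 neg_eq_iff_add_eq_0)
lemma scaleC_diff_right: "c *\<^sub>C (x - y::'a::complex_hilbert) = c *\<^sub>C x - c *\<^sub>C y"
  by (simp only: diff_conv_add_uminus scaleC_add_right scaleC_minus_right)
lemma scaleC_minus1: "(-1) *\<^sub>C (x::'a::complex_hilbert) = - x"
  using scaleC_of_real[of "-1" x] by simp
lemma scaleC_minus_left: "(- c) *\<^sub>C (x::'a::complex_hilbert) = - (c *\<^sub>C x)"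
  using scaleC_scaleC[of "-1" c x] by (simp add: scaleC_minus1)
lemma cinner_zero_left[simp]: "cinner 0 (y::'a::complex_hilbert) = 0"
  using cinner_add_left[of 0 0 y] by simp
lemma cinner_zero_right[simp]: "cinner (y::'a::complex_hilbert) 0 = 0"
  using cinner_add_right[of y 0 0] by simp
lemma cinner_minus_right: "cinner x (- y::'a::complex_hilbert) = - cinner x y"
  using cinner_scaleC_right[of x "-1" y] by (simp add: scaleC_minus1)
lemma cinner_minus_left: "cinner (- x) (y::'a::complex_hilbert) = - cinner x y"
  using cinner_scaleC_left[of "-1" x y] by (simp add: scaleC_minus1)
lemma cinner_diff_right: "cinner x (y - z::'a::complex_hilbert) = cinner x y - cinner x z"
  by (simp only: diff_conv_add_uminus cinner_add_right cinner_minus_right)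
lemma cinner_diff_left: "cinner (x - y) (z::'a::complex_hilbert) = cinner x z - cinner y z"
  by (simp only: diff_conv_add_uminus cinner_add_left cinner_minus_left)

lemma norm_sq_cinner: "norm (x::'a::complex_hilbert) ^ 2 = Re (cinner x x)"
  by (simp add: norm_cinner cinner_self_nonneg)
lemma cinner_self: "cinner (x::'a::complex_hilbert) x = complex_of_real (norm x ^ 2)"
proof -
  have "Im (cinner x x) = 0" using cinner_conj[of x x]
    by (simp add: complex_eq_iff)
  then show ?thesis by (simp add: norm_sq_cinner complex_eq_iff)
qed

lemma norm_scaleC: "norm (c *\<^sub>C (x::'a::complex_hilbert)) = cmod c * norm x"
proof -
  have "norm (c *\<^sub>C x) ^ 2 = Re (cnj c * (c * complex_of_real (norm x ^ 2)))"
    by (subst norm_sq_cinner) (simp add: cinner_scaleC_left cinner_scaleC_right cinner_self[of x])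
  also have "\<dots> = (cmod c * norm x) ^ 2"
    by (simp add: cmod_power2 power_mult_distrib algebra_simps; simp add: power2_eq_square)
  finally show ?thesis
    by (simp add: power2_eq_iff_nonneg)
qed

lemma cinner_ext_right:
  assumes "\<And>x. cinner x u = cinner x (v::'a::complex_hilbert)" shows "u = v"
proof -
  have "cinner (u - v) (u - v) = 0" by (simp add: cinner_diff_right assms)
  then show ?thesis using cinner_self_eq_zero[of "u - v"] by simp
qed

lemma cs_real: "Re (cinner x y) \<le> norm (x::'a::complex_hilbert) * norm y"
proof (cases "norm x * norm y = 0")
  case True
  then have "x = 0 \<or> y = 0" by simp
  then show ?thesis by auto
next
  case False
  define P where "P = norm x * norm y"
  let ?a = "complex_of_real (norm y)" and ?b = "complex_of_real (norm x)"
  have c: "Re (cinner y x) = Re (cinner x y)" using cinner_conj[of y x] by simp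
  have e1: "cinner (?a *\<^sub>C x - ?b *\<^sub>C y) (?a *\<^sub>C x - ?b *\<^sub>C y)
     = ?a*?a*cinner x x - ?a*?b*cinner x y - ?b*?a*cinner y x + ?b*?b*cinner y y"
    apply (simp add: cinner_diff_left cinner_diff_right cinner_scaleC_left cinner_scaleC_right)
    by (simp add: algebra_simps)
  have "0 \<le> Re (cinner (?a *\<^sub>C x - ?b *\<^sub>C y) (?a *\<^sub>C x - ?b *\<^sub>C y))"
    by (rule cinner_self_nonneg)
  also have "\<dots> = 2 * (P * P) - 2 * P * Re (cinner x y)"
    unfolding e1 by (simp add: cinner_self c P_def power2_eq_square)
  finally have "P * Re (cinner x y) \<le> P * P" by simp
  moreover have "P > 0" using False by (simp add: P_def)
  ultimately have "Re (cinner x y) \<le> P" by (meson mult_le_cancel_left_pos)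
  then show ?thesis by (simp add: P_def)
qed

lemma cs: "cmod (cinner x y) \<le> norm (x::'a::complex_hilbert) * norm y"
proof (cases "cinner x y = 0")
  case True then show ?thesis by simp
next
  case False
  define c where "c = cnj (cinner x y) / cmod (cinner x y)"
  have cm: "cmod c = 1" using False by (simp add: c_def norm_divide)
  have sq: "cinner x y * cnj (cinner x y) = complex_of_real (cmod (cinner x y)) * complex_of_real (cmod (cinner x y))"
    using complex_norm_square[of "cinner x y"] by (simp add: power2_eq_square)
  have "cinner x (c *\<^sub>C y) = complex_of_real (cmod (cinner x y))"
    using False sq by (simp add: cinner_scaleC_right c_def field_simps)
  then have "cmod (cinner x y) = Re (cinner x (c *\<^sub>C y))" by simp
  also have "\<dots> \<le> norm x * norm (c *\<^sub>C y)" by (rule cs_real)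
  finally show ?thesis by (simp add: norm_scaleC cm)
qed

lemma parallelogram:
  "norm (x + y) ^ 2 + norm (x - y) ^ 2 = 2 * norm x ^ 2 + 2 * norm (y::'a::complex_hilbert) ^ 2"
  by (simp add: norm_sq_cinner cinner_add_left cinner_add_right cinner_diff_left cinner_diff_right)



lemma riesz:
  fixes f :: "'a::complex_hilbert \<Rightarrow> complex"
  assumes add: "\<And>x y. f (x + y) = f x + f y"
    and scal: "\<And>c x. f (c *\<^sub>C x) = c * f x"
    and bnd: "\<And>x. cmod (f x) \<le> norm x * K"
  shows "\<exists>z. \<forall>x. f x = cinner z x"
proof (cases "\<forall>x. f x = 0")
  case True then show ?thesis by (intro exI[of _ 0]) simp
next
  case False
  then obtain x0 where fx0: "f x0 \<noteq> 0" by auto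
  have f0: "f 0 = 0" using scal[of 0 0] by simp
  have x0nz: "x0 \<noteq> 0" using fx0 f0 by auto
  define U where "U = {x::'a. norm x = 1}"
  define M where "M = (SUP x\<in>U. Re (f x))"
  have bdd: "bdd_above ((\<lambda>x. Re (f x)) ` U)"
  proof (rule bdd_aboveI2)
    fix x assume "x \<in> U"
    then show "Re (f x) \<le> K" using complex_Re_le_cmod[of "f x"] bnd[of x] by (simp add: U_def)
  qed
  have "(complex_of_real (1 / norm x0)) *\<^sub>C x0 \<in> U"
    using x0nz by (simp add: U_def norm_scaleC norm_divide)
  then have Une: "U \<noteq> {}" by auto
  have upper: "Re (f x) \<le> M" if "x \<in> U" for x
    unfolding M_def by (rule cSUP_upper[OF that bdd])
  have key: "cmod (f x) \<le> M * norm x" for x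
  proof (cases "x = 0")
    case True then show ?thesis by (simp add: f0)
  next
    case False
    define c where "c = (if f x = 0 then 1 else cnj (f x) / cmod (f x))"
    have cm: "cmod c = 1" by (simp add: c_def norm_divide)
    have cf: "c * f x = complex_of_real (cmod (f x))"
    proof (cases "f x = 0")
      case True then show ?thesis by (simp add: c_def)
    next
      case False
      have "cnj (f x) * f x = complex_of_real (cmod (f x)) * complex_of_real (cmod (f x))"
        using complex_norm_square[of "f x"] by (simp add: power2_eq_square mult.commute)
      then show ?thesis using False by (simp add: c_def field_simps)
    qed
    let ?y = "(c / complex_of_real (norm x)) *\<^sub>C x"
    have "?y \<in> U" using False by (simp add: U_def norm_scaleC norm_divide cm)
    then have "Re (f ?y) \<le> M" by (rule upper)
    moreover have "f ?y = complex_of_real (cmod (f x) / norm x)"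
      by (simp add: scal cf[symmetric])
    ultimately have "cmod (f x) / norm x \<le> M" by simp
    then show ?thesis using False by (simp add: divide_le_eq mult.commute)
  qed
  have Mpos: "M > 0"
  proof (rule ccontr)
    assume "\<not> M > 0"
    then have "M * norm x0 \<le> 0" by (simp add: mult_nonpos_nonneg)
    moreover have "cmod (f x0) > 0" using fx0 by simp
    ultimately show False using key[of x0] by linarith
  qed
  have "\<forall>n. \<exists>x\<in>U. M - inverse (real (Suc n)) < Re (f x)"
  proof
    fix n
    have "M - inverse (real (Suc n)) < M" by simp
    then show "\<exists>x\<in>U. M - inverse (real (Suc n)) < Re (f x)"
      unfolding M_def using less_cSUP_iff[OF Une bdd] by blast
  qed
  then obtain xs where xsU: "\<And>n. xs n \<in> U" and xsM: "\<And>n. M - inverse (real (Suc n)) < Re (f (xs n))"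
    by metis
  have xs1: "norm (xs n) = 1" for n using xsU[of n] by (simp add: U_def)
  have cb: "norm (xs n - xs m) ^ 2 \<le> 4 * ((inverse (real (Suc n)) + inverse (real (Suc m))) / M)" for n m
  proof -
    define d where "d = inverse (real (Suc n)) + inverse (real (Suc m))"
    have dpos: "d > 0" by (simp add: d_def add_pos_pos)
    have "2 * M - d < Re (f (xs n + xs m))"
      using xsM[of n] xsM[of m] by (simp add: add d_def)
    also have "\<dots> \<le> cmod (f (xs n + xs m))" by (rule complex_Re_le_cmod)
    also have "\<dots> \<le> M * norm (xs n + xs m)" by (rule key)
    finally have "M * (2 - d / M) < M * norm (xs n + xs m)" using Mpos by (simp add: algebra_simps)
    then have lt: "2 - d / M < norm (xs n + xs m)" using Mpos by simp
    have par: "norm (xs n + xs m) ^ 2 + norm (xs n - xs m) ^ 2 = 4"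
      using parallelogram[of "xs n" "xs m"] by (simp add: xs1)
    show ?thesis
    proof (cases "2 - d / M \<ge> 0")
      case True
      then have "(2 - d / M) ^ 2 \<le> norm (xs n + xs m) ^ 2"
        using lt by (intro power_mono) auto
      then have "norm (xs n - xs m) ^ 2 \<le> 4 - (2 - d / M) ^ 2" using par by simp
      also have "\<dots> = 4 * (d / M) - (d / M) ^ 2" by (simp add: power2_eq_square algebra_simps)
      also have "\<dots> \<le> 4 * (d / M)" by simp
      finally show ?thesis by (simp add: d_def)
    next
      case False
      have "norm (xs n - xs m) ^ 2 \<le> 4" using par by (smt (verit) zero_le_power2)
      also have "\<dots> \<le> 4 * (d / M)" using False by simp
      finally show ?thesis by (simp add: d_def)
    qed
  qed
  have "Cauchy xs"
  proof (rule metric_CauchyI)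
    fix e :: real assume e: "e > 0"
    obtain N :: nat where N: "8 / (M * e ^ 2) < real N" using reals_Archimedean2 by blast
    have Ne: "8 / (real (Suc N) * M) < e ^ 2"
    proof -
      have "8 < real N * (M * e ^ 2)" using N Mpos e by (simp add: divide_less_eq mult.commute)
      also have "\<dots> \<le> real (Suc N) * (M * e ^ 2)" using Mpos e by (intro mult_right_mono) auto
      finally have "8 < real (Suc N) * (M * e ^ 2)" .
      moreover have pos: "real (Suc N) * M > 0" using Mpos by simp
      ultimately show ?thesis unfolding pos_divide_less_eq[OF pos] by (simp add: mult_ac)
    qed
    show "\<exists>N. \<forall>m\<ge>N. \<forall>n\<ge>N. dist (xs m) (xs n) < e"
    proof (intro exI allI impI)
      fix m n assume mN: "m \<ge> N" and nN: "n \<ge> N"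
      have i1: "inverse (real (Suc m)) \<le> inverse (real (Suc N))"
        using mN by (simp add: le_imp_inverse_le)
      have i2: "inverse (real (Suc n)) \<le> inverse (real (Suc N))"
        using nN by (simp add: le_imp_inverse_le)
      have "norm (xs m - xs n) ^ 2 \<le> 4 * ((inverse (real (Suc m)) + inverse (real (Suc n))) / M)"
        by (rule cb)
      also have "\<dots> \<le> 4 * ((2 * inverse (real (Suc N))) / M)"
      proof -
        have "inverse (real (Suc m)) + inverse (real (Suc n)) \<le> 2 * inverse (real (Suc N))"
          using i1 i2 by linarith
        then show ?thesis using Mpos by (intro mult_left_mono divide_right_mono) auto
      qed
      also have "\<dots> = 8 / (real (Suc N) * M)" by (simp add: field_simps)
      also have "\<dots> < e ^ 2" by (rule Ne)
      finally have "norm (xs m - xs n) < e"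
        using e by (simp add: power_less_imp_less_base)
      then show "dist (xs m) (xs n) < e" by (simp add: dist_norm)
    qed
  qed
  then obtain u where lim: "xs \<longlonglongrightarrow> u" using Cauchy_convergent_iff convergent_def by blast
  have "(\<lambda>n. norm (xs n)) \<longlonglongrightarrow> norm u" by (rule tendsto_norm[OF lim])
  then have nu: "norm u = 1" by (simp add: xs1 LIMSEQ_const_iff)
  have blf: "bounded_linear f"
  proof (rule bounded_linear_intro[of f K])
    show "f (x + y) = f x + f y" for x y by (rule add)
    show "f (r *\<^sub>R x) = r *\<^sub>R f x" for r x
      using scal[of "complex_of_real r" x] by (simp add: scaleC_of_real scaleR_conv_of_real)
    show "norm (f x) \<le> norm x * K" for x using bnd by simp
  qed
  have lre: "(\<lambda>n. Re (f (xs n))) \<longlonglongrightarrow> Re (f u)"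
    by (rule tendsto_Re[OF bounded_linear.tendsto[OF blf lim]])
  have lM: "(\<lambda>n. M - inverse (real (Suc n))) \<longlonglongrightarrow> M"
    using tendsto_diff[OF tendsto_const LIMSEQ_inverse_real_of_nat, of M] by simp
  have ge: "M \<le> Re (f u)"
    by (rule tendsto_le[OF trivial_limit_sequentially lre lM]) (intro always_eventually allI less_imp_le xsM)
  have le: "cmod (f u) \<le> M" using key[of u] nu by simp
  have fu: "f u = complex_of_real M"
  proof -
    have "Re (f u) = M" using ge le complex_Re_le_cmod[of "f u"] by simp
    moreover have "cmod (f u) ^ 2 \<le> M ^ 2" using le by (simp add: power_mono)
    ultimately have "Im (f u) ^ 2 \<le> 0" by (simp add: cmod_power2)
    then have "Im (f u) = 0" by simp
    with \<open>Re (f u) = M\<close> show ?thesis by (simp add: complex_eq_iff)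
  qed
  have orth: "cinner u x = 0" if fx: "f x = 0" for x
  proof -
    define a where "a = cinner u x"
    define s where "s = 1 / (norm x ^ 2 + 1)"
    define t where "t = - (complex_of_real s * cnj a)"
    have nn: "norm x ^ 2 + 1 > 0" using zero_le_power2[of "norm x"] by linarith
    have spos: "s > 0" using nn by (simp add: s_def)
    have sn: "s * norm x ^ 2 < 1" using nn by (simp add: s_def)
    have "f (u + t *\<^sub>C x) = complex_of_real M" by (simp add: add scal fx fu)
    then have "M \<le> M * norm (u + t *\<^sub>C x)" using key[of "u + t *\<^sub>C x"] Mpos by simp
    then have "1 \<le> norm (u + t *\<^sub>C x)" using Mpos by simp
    then have n1: "1 \<le> norm (u + t *\<^sub>C x) ^ 2" by (simp add: one_le_power)
    have "norm (u + t *\<^sub>C x) ^ 2 = Re (cinner u u + t * cinner u x + cnj t * cinner x u + cnj t * t * cinner x x)"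
      by (simp add: norm_sq_cinner cinner_add_left cinner_add_right cinner_scaleC_left cinner_scaleC_right algebra_simps)
    also have "\<dots> = 1 - 2 * s * (Re a ^ 2 + Im a ^ 2) + s ^ 2 * (Re a ^ 2 + Im a ^ 2) * norm x ^ 2"
      using nu by (simp add: cinner_self[of u] cinner_self[of x] cinner_conj[of x u] a_def[symmetric] t_def
          power2_eq_square algebra_simps)
    finally have "0 \<le> s * (Re a ^ 2 + Im a ^ 2) * (s * norm x ^ 2 - 2)" using n1 by (simp add: algebra_simps power2_eq_square)
    moreover have "s * norm x ^ 2 - 2 < 0" using sn by simp
    ultimately have "s * (Re a ^ 2 + Im a ^ 2) \<le> 0" by (simp add: mult_le_0_iff zero_le_mult_iff)
    then have "cmod a ^ 2 \<le> 0" using spos by (simp add: mult_le_0_iff cmod_power2)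
    then show ?thesis by (simp add: a_def)
  qed
  show ?thesis
  proof (intro exI allI)
    fix x
    let ?y = "x - (f x / complex_of_real M) *\<^sub>C u"
    have "f ?y = 0"
    proof -
      have "f ?y = f x - (f x / complex_of_real M) * f u"
        using add[of ?y "(f x / complex_of_real M) *\<^sub>C u"] scal by (simp add: eq_diff_eq)
      then show ?thesis using Mpos by (simp add: fu)
    qed
    then have "cinner u ?y = 0" by (rule orth)
    then have "cinner u x = f x / complex_of_real M"
      using nu by (simp add: cinner_diff_right cinner_scaleC_right cinner_self[of u])
    then show "f x = cinner (complex_of_real M *\<^sub>C u) x"
      using Mpos by (simp add: cinner_scaleC_left)
  qed
qed



lemma bco_add: "bounded_clinear_op T \<Longrightarrow> T (x + y) = T x + T y"
  by (simp add: bounded_clinear_op_def)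
lemma bco_scale: "bounded_clinear_op T \<Longrightarrow> T (c *\<^sub>C x) = c *\<^sub>C T x"
  by (simp add: bounded_clinear_op_def)
lemma bco_minus: "bounded_clinear_op T \<Longrightarrow> T (- x) = - T x"
  using bco_scale[of T "-1" x] by (simp add: scaleC_minus1)
lemma bco_diff: "bounded_clinear_op T \<Longrightarrow> T (x - y) = T x - T y"
  by (simp add: diff_conv_add_uminus bco_add bco_minus del: add_uminus_conv_diff)
lemma bco_bound: "bounded_clinear_op T \<Longrightarrow> \<exists>K>0. \<forall>x. norm (T x) \<le> norm x * K"
proof -
  assume "bounded_clinear_op T"
  then obtain K where K: "\<And>x. norm (T x) \<le> norm x * K" by (auto simp: bounded_clinear_op_def)
  have "norm (T x) \<le> norm x * (max K 0 + 1)" for x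
  proof -
    have "norm x * K \<le> norm x * (max K 0 + 1)" by (intro mult_left_mono) auto
    then show ?thesis using K[of x] by linarith
  qed
  then show ?thesis by (intro exI[of _ "max K 0 + 1"]) auto
qed

lemma bco_intro:
  assumes "\<And>x y. T (x + y) = T x + T y" "\<And>c x. T (c *\<^sub>C x) = c *\<^sub>C T x"
    "\<And>x. norm (T x) \<le> norm x * K"
  shows "bounded_clinear_op T"
  using assms unfolding bounded_clinear_op_def by blast

lemma adj_exists:
  assumes T: "bounded_clinear_op (T::'a::complex_hilbert \<Rightarrow> 'a)"
  shows "\<exists>A. \<forall>x y. cinner (T x) y = cinner x (A y)"
proof -
  obtain K where K: "\<And>x. norm (T x) \<le> norm x * K" using bco_bound[OF T] by blast
  have "\<forall>y. \<exists>z. \<forall>x. cinner y (T x) = cinner z x"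
  proof
    fix y
    show "\<exists>z. \<forall>x. cinner y (T x) = cinner z x"
    proof (rule riesz[where K = "norm y * K"])
      show "cinner y (T (x + x')) = cinner y (T x) + cinner y (T x')" for x x'
        by (simp add: bco_add[OF T] cinner_add_right)
      show "cinner y (T (c *\<^sub>C x)) = c * cinner y (T x)" for c x
        by (simp add: bco_scale[OF T] cinner_scaleC_right)
      show "cmod (cinner y (T x)) \<le> norm x * (norm y * K)" for x
      proof -
        have "cmod (cinner y (T x)) \<le> norm y * norm (T x)" by (rule cs)
        also have "\<dots> \<le> norm y * (norm x * K)" by (intro mult_left_mono K) auto
        finally show ?thesis by (simp add: mult_ac)
      qed
    qed
  qed
  then obtain Z where Z: "\<And>y x. cinner y (T x) = cinner (Z y) x" by metis
  have "cinner (T x) y = cinner x (Z y)" for x y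
    using cinner_conj[of "T x" y] Z[of y x] cinner_conj[of x "Z y"] by simp
  then show ?thesis by blast
qed

lemma adj: "bounded_clinear_op T \<Longrightarrow> cinner (T x) y = cinner x (cadjoint T y)"
  using someI_ex[OF adj_exists[of T]] unfolding cadjoint_def by blast

lemma adj2: "bounded_clinear_op T \<Longrightarrow> cinner (cadjoint T x) y = cinner x (T y)"
  using adj[of T y x] cinner_conj[of "cadjoint T x" y] cinner_conj[of x "T y"] by simp

lemma adj_unique:
  assumes "bounded_clinear_op T" "\<And>x y. cinner (T x) y = cinner x (A y)"
  shows "cadjoint T = A"
proof
  fix y
  show "cadjoint T y = A y"
    by (rule cinner_ext_right) (simp add: adj[OF assms(1), symmetric] assms(2))
qed

lemma bco_adj:
  assumes T: "bounded_clinear_op T"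
  shows "bounded_clinear_op (cadjoint T)"
proof -
  obtain K where K: "\<And>x. norm (T x) \<le> norm x * K" "K > 0" using bco_bound[OF T] by blast
  show ?thesis
  proof (rule bco_intro[where K = K])
    show "cadjoint T (x + y) = cadjoint T x + cadjoint T y" for x y
      by (rule cinner_ext_right) (simp add: adj[OF T, symmetric] cinner_add_right)
    show "cadjoint T (c *\<^sub>C x) = c *\<^sub>C cadjoint T x" for c x
      by (rule cinner_ext_right) (simp add: adj[OF T, symmetric] cinner_scaleC_right)
    show "norm (cadjoint T y) \<le> norm y * K" for y
    proof (cases "norm (cadjoint T y) = 0")
      case True then show ?thesis using K by simp
    next
      case False
      let ?z = "cadjoint T y"
      have "norm ?z ^ 2 = Re (cinner (T ?z) y)" by (simp add: norm_sq_cinner adj[OF T])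
      also have "\<dots> \<le> norm (T ?z) * norm y" by (rule cs_real)
      also have "\<dots> \<le> norm ?z * K * norm y" by (intro mult_right_mono K) auto
      finally have "norm ?z * norm ?z \<le> norm ?z * (norm y * K)" by (simp add: power2_eq_square mult_ac)
      then show ?thesis using False by (simp add: mult_le_cancel_left_pos)
    qed
  qed
qed

lemma adj_adj: assumes T: "bounded_clinear_op T" shows "cadjoint (cadjoint T) = T"
  by (rule adj_unique[OF bco_adj[OF T]]) (simp add: adj2[OF T])

lemma bco_sum:
  assumes A: "bounded_clinear_op A" and B: "bounded_clinear_op B"
  shows "bounded_clinear_op (\<lambda>x. A x + B x)"
proof -
  obtain K1 where K1: "\<And>x. norm (A x) \<le> norm x * K1" using bco_bound[OF A] by blast
  obtain K2 where K2: "\<And>x. norm (B x) \<le> norm x * K2" using bco_bound[OF B] by blast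
  show ?thesis
  proof (rule bco_intro[where K = "K1 + K2"])
    show "A (x + y) + B (x + y) = A x + B x + (A y + B y)" for x y
      by (simp add: bco_add[OF A] bco_add[OF B] add_ac)
    show "A (c *\<^sub>C x) + B (c *\<^sub>C x) = c *\<^sub>C (A x + B x)" for c x
      by (simp add: bco_scale[OF A] bco_scale[OF B] scaleC_add_right)
    show "norm (A x + B x) \<le> norm x * (K1 + K2)" for x
      using norm_triangle_ineq[of "A x" "B x"] K1[of x] K2[of x] by (simp add: algebra_simps)
  qed
qed

lemma bco_smul:
  assumes A: "bounded_clinear_op A"
  shows "bounded_clinear_op (\<lambda>x. c *\<^sub>C A x)"
proof -
  obtain K where K: "\<And>x. norm (A x) \<le> norm x * K" using bco_bound[OF A] by blast
  show ?thesis
  proof (rule bco_intro[where K = "cmod c * K"])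
    show "c *\<^sub>C A (x + y) = c *\<^sub>C A x + c *\<^sub>C A y" for x y
      by (simp add: bco_add[OF A] scaleC_add_right)
    show "c *\<^sub>C A (d *\<^sub>C x) = d *\<^sub>C (c *\<^sub>C A x)" for d x
      by (simp add: bco_scale[OF A] scaleC_scaleC mult.commute)
    show "norm (c *\<^sub>C A x) \<le> norm x * (cmod c * K)" for x
      using mult_left_mono[OF K[of x], of "cmod c"] by (simp add: norm_scaleC mult_ac)
  qed
qed

lemma bco_comp:
  assumes A: "bounded_clinear_op A" and B: "bounded_clinear_op B"
  shows "bounded_clinear_op (\<lambda>x. A (B x))"
proof -
  obtain K1 where K1: "\<And>x. norm (A x) \<le> norm x * K1" "K1 > 0" using bco_bound[OF A] by blast
  obtain K2 where K2: "\<And>x. norm (B x) \<le> norm x * K2" using bco_bound[OF B] by blast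
  show ?thesis
  proof (rule bco_intro[where K = "K2 * K1"])
    show "A (B (x + y)) = A (B x) + A (B y)" for x y
      by (simp add: bco_add[OF A] bco_add[OF B])
    show "A (B (c *\<^sub>C x)) = c *\<^sub>C A (B x)" for c x
      by (simp add: bco_scale[OF A] bco_scale[OF B])
    show "norm (A (B x)) \<le> norm x * (K2 * K1)" for x
    proof -
      have "norm (A (B x)) \<le> norm (B x) * K1" by (rule K1)
      also have "\<dots> \<le> norm x * K2 * K1" by (intro mult_right_mono K2 less_imp_le[OF K1(2)])
      finally show ?thesis by (simp add: mult_ac)
    qed
  qed
qed

lemma diff_as_sum: "(\<lambda>x. A x - B x) = (\<lambda>x. A x + (-1) *\<^sub>C (B x :: 'a::complex_hilbert))"
  by (simp add: scaleC_minus1)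

lemma bco_diff_op:
  assumes A: "bounded_clinear_op A" and B: "bounded_clinear_op B"
  shows "bounded_clinear_op (\<lambda>x. A x - B x)"
  unfolding diff_as_sum by (intro bco_sum bco_smul A B)

lemma adj_smul: "bounded_clinear_op A \<Longrightarrow> cadjoint (\<lambda>x. c *\<^sub>C A x) = (\<lambda>x. cnj c *\<^sub>C cadjoint A x)"
  by (rule adj_unique[OF bco_smul]) (simp_all add: cinner_scaleC_left cinner_scaleC_right adj)

lemma opRe_smul: "bounded_clinear_op A \<Longrightarrow>
   opRe (\<lambda>x. e *\<^sub>C A x) = (\<lambda>x. (1/2) *\<^sub>C (e *\<^sub>C A x + cnj e *\<^sub>C cadjoint A x))"
  by (simp add: opRe_def adj_smul)

lemma N_nonneg: "algebra_norm N \<Longrightarrow> bounded_clinear_op A \<Longrightarrow> 0 \<le> N A"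
  by (simp add: algebra_norm_def)
lemma N_smul: "algebra_norm N \<Longrightarrow> bounded_clinear_op A \<Longrightarrow> N (\<lambda>x. c *\<^sub>C A x) = cmod c * N A"
  by (simp add: algebra_norm_def)
lemma N_sum: "algebra_norm N \<Longrightarrow> bounded_clinear_op A \<Longrightarrow> bounded_clinear_op B \<Longrightarrow>
    N (\<lambda>x. A x + B x) \<le> N A + N B"
  by (simp add: algebra_norm_def)
lemma N_comp: "algebra_norm N \<Longrightarrow> bounded_clinear_op A \<Longrightarrow> bounded_clinear_op B \<Longrightarrow>
    N (\<lambda>x. A (B x)) \<le> N A * N B"
  unfolding algebra_norm_def o_def[symmetric] by blast
lemma N_diff: "algebra_norm N \<Longrightarrow> bounded_clinear_op A \<Longrightarrow> bounded_clinear_op B \<Longrightarrow>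
    N (\<lambda>x. A x - B x) \<le> N A + N B"
  unfolding diff_as_sum using N_sum[of N A "\<lambda>x. (-1) *\<^sub>C B x"] N_smul[of N B "-1"] bco_smul[of B "-1"]
  by simp



lemma exp_shift: "exp (\<i> * complex_of_real (\<theta> + pi / 2)) = \<i> * exp (\<i> * complex_of_real \<theta>)"
proof -
  have "exp (\<i> * complex_of_real (\<theta> + pi / 2)) = cis (\<theta> + pi / 2)" by (rule cis_conv_exp[symmetric])
  also have "\<dots> = cis \<theta> * cis (pi / 2)" by (simp only: cis_mult)
  also have "\<dots> = cis \<theta> * \<i>" by (simp only: cis_pi_half)
  also have "\<dots> = \<i> * exp (\<i> * complex_of_real \<theta>)" unfolding cis_conv_exp by (rule mult.commute)
  finally show ?thesis .
qed

lemma identity_plus: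
  fixes T S :: "'a::complex_hilbert \<Rightarrow> 'a" and e :: complex
  assumes T: "bounded_clinear_op T" and S: "bounded_clinear_op S"
  defines "R \<equiv> \<lambda>x. (1/2) *\<^sub>C (e *\<^sub>C S x + cnj e *\<^sub>C cadjoint S x)"
  shows "opRe (\<lambda>x. e *\<^sub>C (T (S x) + S (cadjoint T x))) = (\<lambda>x. T (R x) + R (cadjoint T x))"
proof -
  have E: "bounded_clinear_op (\<lambda>x. T (S x) + S (cadjoint T x))"
    by (rule bco_sum[OF bco_comp[OF T S] bco_comp[OF S bco_adj[OF T]]])
  have adjE: "cadjoint (\<lambda>x. T (S x) + S (cadjoint T x)) = (\<lambda>x. cadjoint S (cadjoint T x) + T (cadjoint S x))"
    by (rule adj_unique[OF E]) (simp add: cinner_add_left cinner_add_right adj[OF T] adj[OF S] adj2[OF T])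
  show ?thesis
    using opRe_smul[OF E, of e] unfolding adjE
    by (simp add: R_def bco_add[OF T] bco_scale[OF T] scaleC_add_right add_ac)
qed

lemma identity_minus:
  fixes T S :: "'a::complex_hilbert \<Rightarrow> 'a" and e :: complex
  assumes T: "bounded_clinear_op T" and S: "bounded_clinear_op S"
  defines "R \<equiv> \<lambda>x. (1/2) *\<^sub>C ((\<i> * e) *\<^sub>C S x + cnj (\<i> * e) *\<^sub>C cadjoint S x)"
  shows "opRe (\<lambda>x. e *\<^sub>C (T (S x) - S (cadjoint T x))) = (\<lambda>x. (- \<i>) *\<^sub>C (T (R x) - R (cadjoint T x)))"
proof -
  have E: "bounded_clinear_op (\<lambda>x. T (S x) - S (cadjoint T x))"
    by (rule bco_diff_op[OF bco_comp[OF T S] bco_comp[OF S bco_adj[OF T]]])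
  have adjE: "cadjoint (\<lambda>x. T (S x) - S (cadjoint T x)) = (\<lambda>x. cadjoint S (cadjoint T x) - T (cadjoint S x))"
    by (rule adj_unique[OF E]) (simp add: cinner_diff_left cinner_diff_right adj[OF T] adj[OF S] adj2[OF T])
  show ?thesis
    using opRe_smul[OF E, of e] unfolding adjE
    apply (simp add: R_def bco_add[OF T] bco_diff[OF T] bco_scale[OF T] scaleC_add_right scaleC_diff_right scaleC_scaleC scaleC_minus_left)
    by (simp add: algebra_simps)
qed

theorem theorem2p5:
  fixes T S :: "'a::complex_hilbert \<Rightarrow> 'a"
    and N :: "('a \<Rightarrow> 'a) \<Rightarrow> real"
  assumes "bounded_clinear_op T" and "bounded_clinear_op S" and "algebra_norm N"
  shows "wN N (\<lambda>x. T (S x) + S (cadjoint T x)) \<le> wN N S * (N T + N (cadjoint T)) \<and>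
         wN N (\<lambda>x. T (S x) - S (cadjoint T x)) \<le> wN N S * (N T + N (cadjoint T)) \<and>
         (self_adjoint_norm N \<longrightarrow>
            wN N (\<lambda>x. T (S x) + S (cadjoint T x)) \<le> 2 * wN N S * N T \<and>
            wN N (\<lambda>x. T (S x) - S (cadjoint T x)) \<le> 2 * wN N S * N T)"
proof -
  note T = assms(1) and S = assms(2) and N = assms(3)
  have Ta: "bounded_clinear_op (cadjoint T)" by (rule bco_adj[OF T])
  have Sa: "bounded_clinear_op (cadjoint S)" by (rule bco_adj[OF S])
  define R where "R e = (\<lambda>x. (1/2) *\<^sub>C (e *\<^sub>C S x + cnj e *\<^sub>C cadjoint S x))" for e
  have R0: "bounded_clinear_op (\<lambda>x. e *\<^sub>C S x + cnj e *\<^sub>C cadjoint S x)" for e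
    by (rule bco_sum[OF bco_smul[OF S] bco_smul[OF Sa]])
  have R: "bounded_clinear_op (R e)" for e
    unfolding R_def by (rule bco_smul[OF R0])
  have ReS: "opRe (\<lambda>x. e *\<^sub>C S x) = R e" for e
    unfolding R_def by (rule opRe_smul[OF S])
  have bdd: "bdd_above (range (\<lambda>\<theta>. N (opRe (\<lambda>x. exp (\<i> * complex_of_real \<theta>) *\<^sub>C S x))))"
  proof (rule bdd_aboveI2)
    fix \<theta> :: real
    let ?e = "exp (\<i> * complex_of_real \<theta>)"
    have X0: "0 \<le> N (\<lambda>x. ?e *\<^sub>C S x + cnj ?e *\<^sub>C cadjoint S x)"
      by (rule N_nonneg[OF N R0])
    have X1: "N (\<lambda>x. ?e *\<^sub>C S x + cnj ?e *\<^sub>C cadjoint S x) \<le> N S + N (cadjoint S)"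
      using N_sum[OF N bco_smul[OF S] bco_smul[OF Sa], of ?e "cnj ?e"]
        N_smul[OF N S, of ?e] N_smul[OF N Sa, of "cnj ?e"] by simp
    have "N (R ?e) = cmod (1/2) * N (\<lambda>x. ?e *\<^sub>C S x + cnj ?e *\<^sub>C cadjoint S x)"
      unfolding R_def by (rule N_smul[OF N R0])
    also have "\<dots> \<le> N S + N (cadjoint S)" using X0 X1 by simp
    finally show "N (opRe (\<lambda>x. ?e *\<^sub>C S x)) \<le> N S + N (cadjoint S)" by (simp add: ReS)
  qed
  have Rle: "N (R (exp (\<i> * complex_of_real \<theta>))) \<le> wN N S" for \<theta>
    using cSUP_upper[OF UNIV_I bdd, of \<theta>] by (simp add: wN_def ReS)
  have NT: "0 \<le> N T" "0 \<le> N (cadjoint T)" using N_nonneg[OF N T] N_nonneg[OF N Ta] by auto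
  have P: "N (opRe (\<lambda>x. exp (\<i> * complex_of_real \<theta>) *\<^sub>C (T (S x) + S (cadjoint T x))))
      \<le> wN N S * (N T + N (cadjoint T))" for \<theta>
  proof -
    let ?e = "exp (\<i> * complex_of_real \<theta>)"
    have "N (opRe (\<lambda>x. ?e *\<^sub>C (T (S x) + S (cadjoint T x)))) = N (\<lambda>x. T (R ?e x) + R ?e (cadjoint T x))"
      using identity_plus[OF T S, of ?e] by (simp add: R_def)
    also have "\<dots> \<le> N (\<lambda>x. T (R ?e x)) + N (\<lambda>x. R ?e (cadjoint T x))"
      by (rule N_sum[OF N bco_comp[OF T R] bco_comp[OF R Ta]])
    also have "\<dots> \<le> N T * N (R ?e) + N (R ?e) * N (cadjoint T)"
      using N_comp[OF N T R, of ?e] N_comp[OF N R Ta, of ?e] by linarith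
    also have "\<dots> \<le> N T * wN N S + wN N S * N (cadjoint T)"
      using Rle[of \<theta>] NT by (intro add_mono mult_left_mono mult_right_mono) auto
    finally show ?thesis by (simp add: algebra_simps)
  qed
  have M: "N (opRe (\<lambda>x. exp (\<i> * complex_of_real \<theta>) *\<^sub>C (T (S x) - S (cadjoint T x))))
      \<le> wN N S * (N T + N (cadjoint T))" for \<theta>
  proof -
    let ?e = "exp (\<i> * complex_of_real \<theta>)"
    let ?f = "exp (\<i> * complex_of_real (\<theta> + pi / 2))"
    have "N (opRe (\<lambda>x. ?e *\<^sub>C (T (S x) - S (cadjoint T x))))
        = N (\<lambda>x. (- \<i>) *\<^sub>C (T (R ?f x) - R ?f (cadjoint T x)))"
    proof -
      have fe: "?f = \<i> * ?e" by (rule exp_shift)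
      have "opRe (\<lambda>x. ?e *\<^sub>C (T (S x) - S (cadjoint T x)))
          = (\<lambda>x. (- \<i>) *\<^sub>C (T (R ?f x) - R ?f (cadjoint T x)))"
        unfolding fe R_def by (rule identity_minus[OF T S])
      then show ?thesis by (simp only:)
    qed
    also have "\<dots> = N (\<lambda>x. T (R ?f x) - R ?f (cadjoint T x))"
      using N_smul[OF N bco_diff_op[OF bco_comp[OF T R] bco_comp[OF R Ta]], of "- \<i>"] by simp
    also have "\<dots> \<le> N (\<lambda>x. T (R ?f x)) + N (\<lambda>x. R ?f (cadjoint T x))"
      by (rule N_diff[OF N bco_comp[OF T R] bco_comp[OF R Ta]])
    also have "\<dots> \<le> N T * N (R ?f) + N (R ?f) * N (cadjoint T)"
      using N_comp[OF N T R, of ?f] N_comp[OF N R Ta, of ?f] by linarith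
    also have "\<dots> \<le> N T * wN N S + wN N S * N (cadjoint T)"
      using Rle[of "\<theta> + pi / 2"] NT by (intro add_mono mult_left_mono mult_right_mono) auto
    finally show ?thesis by (simp add: algebra_simps)
  qed
  have plus: "wN N (\<lambda>x. T (S x) + S (cadjoint T x)) \<le> wN N S * (N T + N (cadjoint T))"
    unfolding wN_def[of N "\<lambda>x. T (S x) + S (cadjoint T x)"] by (rule cSUP_least) (auto intro: P)
  have minus: "wN N (\<lambda>x. T (S x) - S (cadjoint T x)) \<le> wN N S * (N T + N (cadjoint T))"
    unfolding wN_def[of N "\<lambda>x. T (S x) - S (cadjoint T x)"] by (rule cSUP_least) (auto intro: M)
  show ?thesis
  proof (intro conjI impI)
    show "wN N (\<lambda>x. T (S x) + S (cadjoint T x)) \<le> wN N S * (N T + N (cadjoint T))" by (rule plus)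
    show "wN N (\<lambda>x. T (S x) - S (cadjoint T x)) \<le> wN N S * (N T + N (cadjoint T))" by (rule minus)
  next
    assume "self_adjoint_norm N"
    then have "N (cadjoint T) = N T" using T by (simp add: self_adjoint_norm_def)
    then have eq: "wN N S * (N T + N (cadjoint T)) = 2 * wN N S * N T" by (simp add: algebra_simps)
    show "wN N (\<lambda>x. T (S x) + S (cadjoint T x)) \<le> 2 * wN N S * N T" using plus eq by simp
    show "wN N (\<lambda>x. T (S x) - S (cadjoint T x)) \<le> 2 * wN N S * N T" using minus eq by simp
  qed
qed


end
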